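(* Let $n\ge2$, let $\mathbf{q}\in\mathbb{R}^n$ with $\sum_i\mathbf{q}_i=1$ and $\mathbf{q}\neq\mathbf{1}/n$, let $q_{\min}=\min_i\mathbf{q}_i$, and let $t\ge1/n$. Define $$\bar{\mathbf{q}}=\frac{\mathbf{1}}{n}+\frac{1}{1-n\,q_{\min}}\Big(\mathbf{q}-\frac{\mathbf{1}}{n}\Big),\qquad \bar{\mathbf{p}}=\frac{\mathbf{1}}{n}+\sqrt{t-\tfrac1n}\,\frac{\mathbf{q}-\mathbf{1}/n}{\|\mathbf{q}-\mathbf{1}/n\|_2}.$$ If $\bar{\mathbf{q}}\cdot\bar{\mathbf{q}}\ge t$, then $\bar{\mathbf{p}}\ge0$ and $\bar{\mathbf{p}}$ maximizes $\mathbf{p}\cdot\mathbf{q}$ over $P(t)$.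
   Context: $\mathbf{1}\in\mathbb{R}^n$ is the all-ones vector. $P(t)=\{\mathbf{p}\in\mathbb{R}^n:\mathbf{p}\ge0,\ \sum_i\mathbf{p}_i=1,\ \mathbf{p}\cdot\mathbf{p}\le t\}$. Inequalities between vectors are componentwise. *)

theory Defs
  imports "HOL-Analysis.Analysis"
begin

definition unif :: "real ^ 'n" where
  "unif = (\<chi> i. 1 / real CARD('n))"

definition Pset :: "real \<Rightarrow> (real ^ 'n) set" where
  "Pset t = {p. (\<forall>i. p $ i \<ge> 0) \<and> (\<Sum>i\<in>UNIV. p $ i) = 1 \<and> p \<bullet> p \<le> t}"

end

theory Submission
  imports Defs
begin

lemma unif_inner: "unif \<bullet> (x::real^'n) = (\<Sum>i\<in>UNIV. x $ i) / real CARD('n)"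
  unfolding inner_vec_def unif_def by (simp add: sum_divide_distrib)

lemma sum_unif: "(\<Sum>i\<in>UNIV. (unif::real^'n) $ i) = 1"
  by (simp add: unif_def)

lemma unif_inner_unif: "unif \<bullet> (unif::real^'n) = 1 / real CARD('n)"
  by (simp only: unif_inner sum_unif)

lemma sum_sub_unif: "(\<Sum>i\<in>UNIV. (x - (unif::real^'n)) $ i) = (\<Sum>i\<in>UNIV. x $ i) - 1"
  by (simp only: vector_minus_component sum_subtractf sum_unif)

theorem mainTheorem9:
  fixes q :: "real ^ 'n" and t :: real
  assumes n2: "CARD('n) \<ge> 2"
    and qsum: "(\<Sum>i\<in>UNIV. q $ i) = 1"
    and qne: "q \<noteq> unif"
    and tge: "t \<ge> 1 / real CARD('n)"
    and hyp: "let qmin = Min (range (\<lambda>i. q $ i));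
                  qbar = unif + (1 / (1 - real CARD('n) * qmin)) *\<^sub>R (q - unif)
              in qbar \<bullet> qbar \<ge> t"
  shows "let pbar = unif + (sqrt (t - 1 / real CARD('n)) / norm (q - unif)) *\<^sub>R (q - unif)
         in (\<forall>i. pbar $ i \<ge> 0) \<and> pbar \<in> Pset t \<and>
            (\<forall>p \<in> Pset t. p \<bullet> q \<le> pbar \<bullet> q)"
proof -
  define N where "N = real CARD('n)"
  have Npos: "N > 0" using n2 by (simp add: N_def)
  define u :: "real^'n" where "u = unif"
  define d where "d = q - u"
  define qmin where "qmin = Min (range (\<lambda>i. q $ i))"
  define c where "c = 1 - N * qmin"
  define s where "s = sqrt (t - 1 / N)"
  have uu: "u \<bullet> u = 1 / N" by (simp add: u_def N_def unif_inner_unif)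
  have ud: "u \<bullet> d = 0" unfolding u_def d_def unif_inner sum_sub_unif qsum by simp
  have du: "d \<bullet> u = 0" using ud by (simp add: inner_commute)
  have dne: "d \<noteq> 0" using qne by (simp add: d_def u_def)
  have nd: "norm d > 0" using dne by simp
  have qmin_le: "qmin \<le> q $ i" for i unfolding qmin_def by (rule Min_le) auto
  have ui: "u $ i = 1 / N" for i by (simp add: u_def unif_def N_def)
  have qmin_lt: "qmin < 1 / N"
  proof (rule ccontr)
    assume "\<not> qmin < 1 / N"
    hence ge: "\<forall>i. d $ i \<ge> 0" using qmin_le by (simp add: d_def ui) (smt (verit))
    have "(\<Sum>i\<in>UNIV. d $ i) = 0" unfolding d_def u_def sum_sub_unif qsum by simp
    hence "\<forall>i\<in>UNIV. d $ i = 0" using ge by (subst sum_nonneg_eq_0_iff[symmetric]) auto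
    hence "d = 0" by (simp add: vec_eq_iff)
    thus False using dne by simp
  qed
  have cpos: "c > 0" using qmin_lt Npos by (simp add: c_def field_simps)
  have dlow: "d $ i \<ge> - c / N" for i
    using qmin_le[of i] Npos by (simp add: d_def ui c_def field_simps)
  have hyp': "(u + (1 / c) *\<^sub>R d) \<bullet> (u + (1 / c) *\<^sub>R d) \<ge> t"
    using hyp by (simp add: Let_def u_def d_def c_def N_def qmin_def)
  have dd2: "d \<bullet> d = norm d * norm d" by (metis power2_norm_eq_inner power2_eq_square)
  have "(u + (1 / c) *\<^sub>R d) \<bullet> (u + (1 / c) *\<^sub>R d) = 1 / N + (norm d / c)^2"
    by (simp add: inner_add_left inner_add_right uu ud du dd2 power_divide power2_eq_square)
  hence tle: "t - 1 / N \<le> (norm d / c)^2" using hyp' by simp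
  have t0: "t - 1 / N \<ge> 0" using tge unfolding N_def by simp
  have s0: "s \<ge> 0" unfolding s_def using t0 by simp
  have ss: "s^2 = t - 1 / N" using t0 unfolding s_def by (rule real_sqrt_pow2)
  have sle: "s \<le> norm d / c"
  proof -
    have "s \<le> sqrt ((norm d / c)^2)" unfolding s_def using tle by (rule real_sqrt_le_mono)
    also have "\<dots> = norm d / c" using cpos by simp
    finally show ?thesis .
  qed
  define k where "k = s / norm d"
  have k0: "k \<ge> 0" using s0 nd by (simp add: k_def)
  have kc: "k * c \<le> 1" using sle nd cpos by (simp add: k_def field_simps)
  define pbar where "pbar = u + k *\<^sub>R d"
  have pos: "\<forall>i. pbar $ i \<ge> 0"
  proof
    fix i
    have "k * d $ i \<ge> k * (- c / N)" using dlow[of i] k0 by (rule mult_left_mono)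
    moreover have "k * (- c / N) \<ge> - 1 / N" using kc Npos by (simp add: field_simps)
    ultimately show "pbar $ i \<ge> 0" by (simp add: pbar_def ui)
  qed
  have dd: "d \<bullet> d = (norm d)^2" by (simp add: power2_norm_eq_inner)
  have psum: "(\<Sum>i\<in>UNIV. pbar $ i) = 1"
  proof -
    have "(\<Sum>i\<in>UNIV. d $ i) = 0" unfolding d_def u_def sum_sub_unif qsum by simp
    moreover have "(\<Sum>i\<in>UNIV. u $ i) = 1" using Npos by (simp add: ui N_def)
    ultimately show ?thesis by (simp add: pbar_def sum.distrib sum_distrib_left[symmetric])
  qed
  have pp: "pbar \<bullet> pbar = t"
  proof -
    have "pbar \<bullet> pbar = 1 / N + k^2 * (norm d)^2"
      by (simp add: pbar_def inner_add_left inner_add_right uu ud du dd power2_eq_square)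
    also have "k^2 * (norm d)^2 = s^2" using nd by (simp add: k_def power_divide)
    finally show ?thesis using ss by simp
  qed
  have q: "q = u + d" by (simp add: d_def)
  have pq: "pbar \<bullet> q = 1 / N + s * norm d"
  proof -
    have "pbar \<bullet> q = 1 / N + k * (norm d)^2"
      unfolding q by (simp add: pbar_def inner_add_left inner_add_right uu ud du dd)
    thus ?thesis using nd by (simp add: k_def power2_eq_square)
  qed
  have opt: "\<forall>p \<in> Pset t. p \<bullet> q \<le> pbar \<bullet> q"
  proof
    fix p :: "real^'n" assume "p \<in> Pset t"
    hence psum1: "(\<Sum>i\<in>UNIV. p $ i) = 1" and ppt: "p \<bullet> p \<le> t" by (auto simp: Pset_def)
    define e where "e = p - u"
    have ue: "u \<bullet> e = 0" unfolding u_def e_def unif_inner sum_sub_unif psum1 by simp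
    have eu: "e \<bullet> u = 0" using ue by (simp add: inner_commute)
    have pe: "p = u + e" by (simp add: e_def)
    have "p \<bullet> p = 1 / N + (norm e)^2"
      unfolding pe by (simp add: inner_add_left inner_add_right uu ue eu power2_norm_eq_inner)
    hence "(norm e)^2 \<le> s^2" using ppt ss by simp
    hence ne: "norm e \<le> s" using s0 by (rule power2_le_imp_le)
    have "p \<bullet> q = 1 / N + e \<bullet> d"
      unfolding pe q by (simp add: inner_add_left inner_add_right uu ue eu ud du)
    also have "e \<bullet> d \<le> norm e * norm d" by (rule norm_cauchy_schwarz)
    also have "norm e * norm d \<le> s * norm d" using ne by (simp add: mult_right_mono)
    finally show "p \<bullet> q \<le> pbar \<bullet> q" using pq by simp
  qed
  have eq: "unif + (sqrt (t - 1 / real CARD('n)) / norm (q - unif)) *\<^sub>R (q - unif) = pbar"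
    unfolding pbar_def k_def s_def d_def u_def N_def ..
  show ?thesis
    unfolding Let_def eq using pos psum pp opt by (simp add: Pset_def)
qed

end
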